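(* Let $a,b,c,x\in X$ with $a\ge b$, $a\neq b$, $x\ge c$, $x\ne c$. Then: (1) $\tau_{a,b}\,c_{x,\{c\}}\,\tau_{a,b}^{-1}\in K_{\{a,b,c,x\}}$; (2) for any $Y\subset X$ such that the partial conjugation $c_{x,Y}$ is defined, $\tau_{a,b}c_{x,Y}\tau_{a,b}^{-1}$ is a product of elements of $K_{\{a,b,x\}}$ and partial conjugations of the form $c_{z,Y'}$ with $z\in\{a,x\}$ and $Y'\subset Y\cup\{x,a\}$; (3) if $c_x$ denotes conjugation by $x$, then $\tau_{a,b}c_x\tau_{a,b}^{-1}\in K_{\{a,b,x\}}$.
   Context: $\Gamma$ is a finite simplicial graph with vertex set $X$, $A_\Gamma$ its right-angled Artin group ($x,y\in X$ commute iff adjacent). $L=X\cup X^{-1}$; for $u\in L$, $\bar u\in X$ is the vertex with $u\in\{\bar u,\bar u^{-1}\}$. $\mathrm{lk}(v)$ is the set of neighbours of $v$, $\mathrm{st}(v)=\mathrm{lk}(v)\cup\{v\}$. Domination: for $v,w\in X$, $v\ge w$ iff $\mathrm{lk}(w)\subset\mathrm{st}(v)$; for letters $u,u'\in L$, $u\ge u'$ iff $\bar u\ge\bar u'$. For $u,v\in L$ with $u\ge v$, $\bar u\ne\bar v$, the transvection $\tau_{u,v}$ is the automorphism sending $v\mapsto vu$ and fixing all generators other than $\bar v$. For $u\in L$ and $Y$ a union of connected components of $\Gamma-\mathrm{st}(\bar u)$, the partial conjugation $c_{u,Y}$ sends $y\mapsto u^{-1}yu$ for $y\in Y$ and fixes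 the other generators. For $u\ge v$, $\bar u\neq \bar v$, we write $c_{u,\{v\}}$ for the automorphism sending $v\mapsto u^{-1}vu$ and fixing all other generators (a one-term partial conjugation). For $x,y,c\in L$ with $x,y\ge c$ and $\bar x,\bar y,\bar c$ distinct, $\tau_{[x,y],c}$ is the automorphism sending $c\mapsto c[x,y]$ and fixing all generators other than $\bar c$. For $Z\subset X$, $K_Z\le\mathrm{Aut}\,A_\Gamma$ is the subgroup generated by all $\tau_{[x,y],c}$ and all $c_{x,\{c\}}$ with $x,y,c\in Z$ (pairwise distinct where required) and $x,y\ge c$, together with all inner automorphisms of $A_\Gamma$. *)

theory Defs
  imports "HOL-Algebra.Algebra"
begin

definition simple_graph :: "'v set \<Rightarrow> ('v \<Rightarrow> 'v \<Rightarrow> bool) \<Rightarrow> bool" where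
  "simple_graph V Adj \<longleftrightarrow> finite V \<and>
     (\<forall>u v. Adj u v \<longrightarrow> u \<in> V \<and> v \<in> V \<and> u \<noteq> v \<and> Adj v u)"

definition lk :: "('v \<Rightarrow> 'v \<Rightarrow> bool) \<Rightarrow> 'v \<Rightarrow> 'v set" where
  "lk Adj v = {w. Adj v w}"

definition st :: "('v \<Rightarrow> 'v \<Rightarrow> bool) \<Rightarrow> 'v \<Rightarrow> 'v set" where
  "st Adj v = insert v (lk Adj v)"

text \<open>Domination v \<ge> w iff lk(w) \<subseteq> st(v).\<close>
definition dominates :: "('v \<Rightarrow> 'v \<Rightarrow> bool) \<Rightarrow> 'v \<Rightarrow> 'v \<Rightarrow> bool" where
  "dominates Adj v w \<longleftrightarrow> lk Adj w \<subseteq> st Adj v"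

definition union_of_components :: "'v set \<Rightarrow> ('v \<Rightarrow> 'v \<Rightarrow> bool) \<Rightarrow> 'v \<Rightarrow> 'v set \<Rightarrow> bool" where
  "union_of_components V Adj v Y \<longleftrightarrow> Y \<subseteq> V - st Adj v \<and>
     (\<forall>p\<in>Y. \<forall>q. (\<lambda>s t. s \<in> V - st Adj v \<and> t \<in> V - st Adj v \<and> Adj s t)\<^sup>*\<^sup>* p q \<longrightarrow> q \<in> Y)"

text \<open>A letter (v, False) stands for the generator v, (v, True) for v\<inverse>.
  The underlying vertex of a letter l is fst l.\<close>
type_synonym 'v letter = "'v \<times> bool"
type_synonym 'v word = "'v letter list"

definition inv_letter :: "'v letter \<Rightarrow> 'v letter" where
  "inv_letter l = (fst l, \<not> snd l)"

definition inv_word :: "'v word \<Rightarrow> 'v word" where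
  "inv_word w = rev (map inv_letter w)"

definition words :: "'v set \<Rightarrow> 'v word set" where
  "words V = lists (V \<times> (UNIV :: bool set))"

inductive raag_step :: "'v set \<Rightarrow> ('v \<Rightarrow> 'v \<Rightarrow> bool) \<Rightarrow> 'v word \<Rightarrow> 'v word \<Rightarrow> bool"
  for V Adj where
  cancel: "fst l \<in> V \<Longrightarrow> raag_step V Adj (u @ [l, inv_letter l] @ w) (u @ w)"
| commute: "Adj (fst l) (fst l') \<Longrightarrow> raag_step V Adj (u @ [l, l'] @ w) (u @ [l', l] @ w)"

definition raag_eq :: "'v set \<Rightarrow> ('v \<Rightarrow> 'v \<Rightarrow> bool) \<Rightarrow> 'v word \<Rightarrow> 'v word \<Rightarrow> bool" where
  "raag_eq V Adj = (sup (raag_step V Adj) (raag_step V Adj)\<inverse>\<inverse>)\<^sup>*\<^sup>*"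

definition raag_class :: "'v set \<Rightarrow> ('v \<Rightarrow> 'v \<Rightarrow> bool) \<Rightarrow> 'v word \<Rightarrow> 'v word set" where
  "raag_class V Adj w = {w'. raag_eq V Adj w w'}"

definition RAAG :: "'v set \<Rightarrow> ('v \<Rightarrow> 'v \<Rightarrow> bool) \<Rightarrow> 'v word set monoid" where
  "RAAG V Adj = \<lparr>carrier = raag_class V Adj ` words V,
     monoid.mult = (\<lambda>A B. {w. \<exists>a\<in>A. \<exists>b\<in>B. raag_eq V Adj (a @ b) w}),
     monoid.one = raag_class V Adj []\<rparr>"

text \<open>The automorphism group Aut A_\<Gamma> (composition of maps: f \<otimes> g = f \<circ> g).\<close>
abbreviation AutRAAG :: "'v set \<Rightarrow> ('v \<Rightarrow> 'v \<Rightarrow> bool) \<Rightarrow> ('v word set \<Rightarrow> 'v word set) monoid" where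
  "AutRAAG V Adj \<equiv> AutoGroup (RAAG V Adj)"

definition subst_word :: "('v \<Rightarrow> 'v word) \<Rightarrow> 'v word \<Rightarrow> 'v word" where
  "subst_word \<phi> w = concat (map (\<lambda>l. if snd l then inv_word (\<phi> (fst l)) else \<phi> (fst l)) w)"

definition induced_map :: "'v set \<Rightarrow> ('v \<Rightarrow> 'v \<Rightarrow> bool) \<Rightarrow> ('v \<Rightarrow> 'v word) \<Rightarrow> 'v word set \<Rightarrow> 'v word set" where
  "induced_map V Adj \<phi> = (\<lambda>A \<in> carrier (RAAG V Adj).
      {w. \<exists>a\<in>A. raag_eq V Adj (subst_word \<phi> a) w})"

definition send_letter :: "'v letter \<Rightarrow> 'v word \<Rightarrow> 'v \<Rightarrow> 'v word" where
  "send_letter v w = (\<lambda>g. if g = fst v then (if snd v then inv_word w else w) else [(g, False)])"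

definition transvection :: "'v set \<Rightarrow> ('v \<Rightarrow> 'v \<Rightarrow> bool) \<Rightarrow> 'v letter \<Rightarrow> 'v letter \<Rightarrow> 'v word set \<Rightarrow> 'v word set" where
  "transvection V Adj u v = induced_map V Adj (send_letter v [v, u])"

definition conj_one :: "'v set \<Rightarrow> ('v \<Rightarrow> 'v \<Rightarrow> bool) \<Rightarrow> 'v letter \<Rightarrow> 'v letter \<Rightarrow> 'v word set \<Rightarrow> 'v word set" where
  "conj_one V Adj u v = induced_map V Adj (send_letter v [inv_letter u, v, u])"

definition comm_transvection :: "'v set \<Rightarrow> ('v \<Rightarrow> 'v \<Rightarrow> bool) \<Rightarrow> 'v letter \<Rightarrow> 'v letter \<Rightarrow> 'v letter \<Rightarrow> 'v word set \<Rightarrow> 'v word set" where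
  "comm_transvection V Adj x y c =
     induced_map V Adj (send_letter c [c, inv_letter x, inv_letter y, x, y])"

definition partial_conj :: "'v set \<Rightarrow> ('v \<Rightarrow> 'v \<Rightarrow> bool) \<Rightarrow> 'v letter \<Rightarrow> 'v set \<Rightarrow> 'v word set \<Rightarrow> 'v word set" where
  "partial_conj V Adj u Y = induced_map V Adj
     (\<lambda>g. if g \<in> Y then [inv_letter u, (g, False), u] else [(g, False)])"

definition inner_aut :: "'v set \<Rightarrow> ('v \<Rightarrow> 'v \<Rightarrow> bool) \<Rightarrow> 'v word \<Rightarrow> 'v word set \<Rightarrow> 'v word set" where
  "inner_aut V Adj w = induced_map V Adj (\<lambda>g. inv_word w @ [(g, False)] @ w)"

definition K_gens :: "'v set \<Rightarrow> ('v \<Rightarrow> 'v \<Rightarrow> bool) \<Rightarrow> 'v set \<Rightarrow> ('v word set \<Rightarrow> 'v word set) set" where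
  "K_gens V Adj Z =
     {comm_transvection V Adj x y c | x y c.
        fst x \<in> Z \<and> fst y \<in> Z \<and> fst c \<in> Z \<and> distinct [fst x, fst y, fst c] \<and>
        dominates Adj (fst x) (fst c) \<and> dominates Adj (fst y) (fst c)}
   \<union> {conj_one V Adj x c | x c.
        fst x \<in> Z \<and> fst c \<in> Z \<and> fst x \<noteq> fst c \<and> dominates Adj (fst x) (fst c)}
   \<union> {inner_aut V Adj w | w. w \<in> words V}"

definition K_sub :: "'v set \<Rightarrow> ('v \<Rightarrow> 'v \<Rightarrow> bool) \<Rightarrow> 'v set \<Rightarrow> ('v word set \<Rightarrow> 'v word set) set" where
  "K_sub V Adj Z = generate (AutRAAG V Adj) (K_gens V Adj Z)"

end

theory Submission imports Defs begin

lemma inv_letter_inv[simp]: "inv_letter (inv_letter l) = l"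
  by (simp add: inv_letter_def)

lemma inv_word_inv[simp]: "inv_word (inv_word w) = w"
  by (simp add: inv_word_def rev_map comp_def)

lemma inv_word_app[simp]: "inv_word (u @ v) = inv_word v @ inv_word u"
  by (simp add: inv_word_def)

lemma inv_word_simps[simp]: "inv_word [] = []" "inv_word (l # w) = inv_word w @ [inv_letter l]"
  by (simp_all add: inv_word_def)

abbreviation lw :: "('a \<Rightarrow> 'a word) \<Rightarrow> 'a letter \<Rightarrow> 'a word" where
  "lw \<phi> l \<equiv> (if snd l then inv_word (\<phi> (fst l)) else \<phi> (fst l))"

lemma subst_simps[simp]: "subst_word \<phi> [] = []"
  "subst_word \<phi> (l # w) = lw \<phi> l @ subst_word \<phi> w"
  "subst_word \<phi> (u @ w) = subst_word \<phi> u @ subst_word \<phi> w"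
  by (simp_all add: subst_word_def)

lemma subst_inv: "subst_word \<phi> (inv_word w) = inv_word (subst_word \<phi> w)"
  by (induction w) (auto simp: inv_letter_def)

lemma subst_subst: "subst_word \<phi> (subst_word \<psi> w) = subst_word (\<lambda>g. subst_word \<phi> (\<psi> g)) w"
  by (induction w) (auto simp: subst_inv)

lemma subst_id: "subst_word (\<lambda>g. [(g, False)]) w = w"
  by (induction w) (auto simp: inv_letter_def)


locale raag =
  fixes V :: "'v set" and Adj :: "'v \<Rightarrow> 'v \<Rightarrow> bool"
  assumes sg: "simple_graph V Adj"
begin

abbreviation eqv (infix "~~~" 50) where "u ~~~ w \<equiv> raag_eq V Adj u w"

lemma adjD: "Adj u v \<Longrightarrow> u \<in> V \<and> v \<in> V \<and> u \<noteq> v \<and> Adj v u"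
  using sg unfolding simple_graph_def by blast

lemma eq_refl[intro,simp]: "u ~~~ u"
  unfolding raag_eq_def by simp

lemma eq_trans[trans]: "u ~~~ v \<Longrightarrow> v ~~~ w \<Longrightarrow> u ~~~ w"
  unfolding raag_eq_def by (rule rtranclp_trans)

lemma eq_sym: "u ~~~ v \<Longrightarrow> v ~~~ u"
  unfolding raag_eq_def
proof (induction rule: rtranclp_induct)
  case base then show ?case by simp
next
  case (step y z)
  have "(sup (raag_step V Adj) (raag_step V Adj)\<inverse>\<inverse>) z y" using step(2) by auto
  then show ?case using step(3) by (meson converse_rtranclp_into_rtranclp)
qed

lemma step_ctx: "raag_step V Adj u v \<Longrightarrow> raag_step V Adj (p @ u @ q) (p @ v @ q)"
proof (induction rule: raag_step.induct)
  case (cancel l u w)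
  then show ?case using raag_step.cancel[where l=l and u="p @ u" and w="w @ q"] by simp
next
  case (commute l l' u w)
  then show ?case using raag_step.commute[where l=l and l'=l' and u="p @ u" and w="w @ q"] by simp
qed

lemma eq_ctx: "u ~~~ v \<Longrightarrow> p @ u @ q ~~~ p @ v @ q"
  unfolding raag_eq_def
proof (induction rule: rtranclp_induct)
  case base then show ?case by simp
next
  case (step y z)
  then have "(sup (raag_step V Adj) (raag_step V Adj)\<inverse>\<inverse>) (p @ y @ q) (p @ z @ q)"
    using step_ctx by auto
  then show ?case using step(3) by (meson rtranclp.rtrancl_into_rtrancl)
qed

lemma eq_app: "u ~~~ u' \<Longrightarrow> v ~~~ v' \<Longrightarrow> u @ v ~~~ u' @ v'"
  using eq_ctx[of u u' "[]" v] eq_ctx[of v v' u' "[]"] by (auto intro: eq_trans)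

lemma eq_cons: "u ~~~ v \<Longrightarrow> l # u ~~~ l # v"
  using eq_ctx[of u v "[l]" "[]"] by simp

lemma cancel_eq: "fst l \<in> V \<Longrightarrow> p @ l # inv_letter l # q ~~~ p @ q"
  unfolding raag_eq_def using raag_step.cancel[where l=l and u=p and w=q] by auto

lemma swap_eq: "Adj (fst l) (fst l') \<Longrightarrow> p @ l # l' # q ~~~ p @ l' # l # q"
  unfolding raag_eq_def using raag_step.commute[where l=l and l'=l' and u=p and w=q] by auto

lemma words_simps[simp]: "[] \<in> words V" "(l # w \<in> words V) = (fst l \<in> V \<and> w \<in> words V)"
  "(u @ w \<in> words V) = (u \<in> words V \<and> w \<in> words V)"
  by (auto simp: words_def mem_Times_iff)

lemma inv_word_words[simp]: "(inv_word w \<in> words V) = (w \<in> words V)"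
  by (induction w) (auto simp: inv_letter_def)

lemma cancel_word: "w \<in> words V \<Longrightarrow> p @ w @ inv_word w @ q ~~~ p @ q"
proof (induction w arbitrary: q rule: rev_induct)
  case Nil then show ?case by simp
next
  case (snoc l w)
  have "p @ (w @ [l]) @ inv_word (w @ [l]) @ q = (p @ w) @ l # inv_letter l # (inv_word w @ q)"
    by simp
  also have "\<dots> ~~~ (p @ w) @ (inv_word w @ q)" using snoc by (intro cancel_eq) auto
  also have "\<dots> ~~~ p @ q" using snoc by simp
  finally show ?case .
qed

lemma cancel_word': "w \<in> words V \<Longrightarrow> p @ inv_word w @ w @ q ~~~ p @ q"
  using cancel_word[of "inv_word w" p q] by simp

fun red :: "'v word \<Rightarrow> 'v word" where
  "red [] = []"
| "red (l # w) = (case red w of [] \<Rightarrow> [l] | m # r \<Rightarrow> if m = inv_letter l then r else l # m # r)"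

lemma red_eq: "w \<in> words V \<Longrightarrow> w ~~~ red w"
proof (induction w)
  case Nil then show ?case by simp
next
  case (Cons l w)
  then have 1: "l # w ~~~ l # red w" by (simp add: eq_cons)
  show ?case
  proof (cases "red w")
    case Nil then show ?thesis using 1 by simp
  next
    case (Cons m r)
    show ?thesis
    proof (cases "m = inv_letter l")
      case True
      have "l # red w ~~~ r" using cancel_eq[of l "[]" r] Cons True \<open>l # w \<in> words V\<close> by simp
      then show ?thesis using 1 Cons True by (simp add: eq_trans)
    next
      case False then show ?thesis using 1 Cons by simp
    qed
  qed
qed

lemma red_cong: "p \<in> words V \<Longrightarrow> q \<in> words V \<Longrightarrow> red p ~~~ red q \<Longrightarrow> p ~~~ q"
  using red_eq eq_sym eq_trans by meson

lemma red_same: "p \<in> words V \<Longrightarrow> q \<in> words V \<Longrightarrow> red p = red q \<Longrightarrow> p ~~~ q"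
  using red_cong by simp

lemma comm_inv:
  assumes "p \<in> words V" "q \<in> words V" "p @ q ~~~ q @ p"
  shows "inv_word p @ q ~~~ q @ inv_word p"
proof -
  have "inv_word p @ q @ p @ inv_word p ~~~ inv_word p @ q" 
    using cancel_word[of p "inv_word p @ q" "[]"] assms by simp
  then have 1: "inv_word p @ q ~~~ inv_word p @ (q @ p) @ inv_word p" using eq_sym by simp
  have 2: "inv_word p @ (q @ p) @ inv_word p ~~~ inv_word p @ (p @ q) @ inv_word p"
    using eq_ctx[OF eq_sym[OF assms(3)]] by blast
  have 3: "inv_word p @ (p @ q) @ inv_word p ~~~ q @ inv_word p"
    using cancel_word'[of p "[]" "q @ inv_word p"] assms by simp
  show ?thesis using 1 2 3 eq_trans by blast
qed

lemma comm_inv2: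
  assumes "p \<in> words V" "q \<in> words V" "p @ q ~~~ q @ p"
  shows "inv_word p @ inv_word q ~~~ inv_word q @ inv_word p"
proof -
  have "q @ inv_word p ~~~ inv_word p @ q" using comm_inv[OF assms] eq_sym by blast
  from comm_inv[OF assms(2) _ this] assms show ?thesis by (simp add: eq_sym)
qed

definition good :: "('v \<Rightarrow> 'v word) \<Rightarrow> bool" where
  "good \<phi> \<longleftrightarrow> (\<forall>g\<in>V. \<phi> g \<in> words V) \<and> (\<forall>u v. Adj u v \<longrightarrow> \<phi> u @ \<phi> v ~~~ \<phi> v @ \<phi> u)"

lemma subst_words: "(\<forall>g\<in>V. \<phi> g \<in> words V) \<Longrightarrow> w \<in> words V \<Longrightarrow> subst_word \<phi> w \<in> words V"
  by (induction w) auto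

lemma good_step: assumes "good \<phi>" "raag_step V Adj u v"
  shows "subst_word \<phi> u ~~~ subst_word \<phi> v"
  using assms(2)
proof (induction rule: raag_step.induct)
  case (cancel l u w)
  have w: "\<phi> (fst l) \<in> words V" using assms(1) cancel unfolding good_def by blast
  have "subst_word \<phi> [l, inv_letter l] = (if snd l then inv_word (\<phi> (fst l)) @ \<phi> (fst l)
     else \<phi> (fst l) @ inv_word (\<phi> (fst l)))" by (simp add: inv_letter_def)
  then show ?case using cancel_word[OF w, of "subst_word \<phi> u" "subst_word \<phi> w"]
      cancel_word'[OF w, of "subst_word \<phi> u" "subst_word \<phi> w"]
    by (auto simp: inv_letter_def)
next
  case (commute l l' u w)
  have w: "\<phi> (fst l) \<in> words V" "\<phi> (fst l') \<in> words V" "\<phi> (fst l) @ \<phi> (fst l') ~~~ \<phi> (fst l') @ \<phi> (fst l)"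
    using assms(1) commute adjD unfolding good_def by blast+
  have "lw \<phi> l @ lw \<phi> l' ~~~ lw \<phi> l' @ lw \<phi> l"
    using comm_inv[OF w] comm_inv[OF w(2,1) eq_sym[OF w(3)]] comm_inv2[OF w] w(3) by (auto intro: eq_sym)
  from eq_ctx[OF this, of "subst_word \<phi> u" "subst_word \<phi> w"] show ?case by simp
qed

lemma good_eq: assumes "good \<phi>" "u ~~~ v" shows "subst_word \<phi> u ~~~ subst_word \<phi> v"
  using assms(2) unfolding raag_eq_def
proof (induction rule: rtranclp_induct)
  case base then show ?case by simp
next
  case (step y z)
  then have "subst_word \<phi> y ~~~ subst_word \<phi> z" using good_step[OF assms(1)] eq_sym by blast
  then show ?case using step(3) eq_trans unfolding raag_eq_def by blast
qed

lemma subst_pointwise: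
  assumes "\<forall>g\<in>V. \<phi> g ~~~ \<psi> g" "\<forall>g\<in>V. \<phi> g \<in> words V" "\<forall>g\<in>V. \<psi> g \<in> words V" "w \<in> words V"
  shows "subst_word \<phi> w ~~~ subst_word \<psi> w"
  using assms(4)
proof (induction w)
  case Nil then show ?case by simp
next
  case (Cons l w)
  have g: "fst l \<in> V" using Cons by simp
  have "lw \<phi> l ~~~ lw \<psi> l"
  proof (cases "snd l")
    case True
    let ?p = "\<phi> (fst l)" and ?q = "\<psi> (fst l)"
    have wp: "?p \<in> words V" "?q \<in> words V" using assms g by auto
    have "inv_word ?p ~~~ inv_word ?p @ ?q @ inv_word ?q"
      using eq_sym[OF cancel_word[OF wp(2), of "inv_word ?p" "[]"]] by simp
    also have "\<dots> ~~~ inv_word ?p @ ?p @ inv_word ?q"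
      using eq_ctx[OF eq_sym[of ?p ?q], of "inv_word ?p" "inv_word ?q"] assms g by auto
    also have "\<dots> ~~~ inv_word ?q" using cancel_word'[OF wp(1), of "[]"] by simp
    finally show ?thesis using True by simp
  next
    case False then show ?thesis using assms g by simp
  qed
  then show ?case using Cons eq_app by simp
qed

lemma class_eq: "raag_class V Adj u = raag_class V Adj v \<longleftrightarrow> u ~~~ v"
proof
  assume "raag_class V Adj u = raag_class V Adj v"
  then have "v \<in> raag_class V Adj u" by (simp add: raag_class_def)
  then show "u ~~~ v" by (simp add: raag_class_def)
next
  assume h: "u ~~~ v"
  show "raag_class V Adj u = raag_class V Adj v"
    unfolding raag_class_def using h eq_sym[OF h] eq_trans by (auto simp del: eq_refl)
qed

lemma RAAG_mult: "raag_class V Adj u \<otimes>\<^bsub>RAAG V Adj\<^esub> raag_class V Adj v = raag_class V Adj (u @ v)"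
proof -
  have "{w. \<exists>a\<in>raag_class V Adj u. \<exists>b\<in>raag_class V Adj v. a @ b ~~~ w} = raag_class V Adj (u @ v)"
  proof (rule Set.set_eqI, rule iffI)
    fix w assume "w \<in> {w. \<exists>a\<in>raag_class V Adj u. \<exists>b\<in>raag_class V Adj v. a @ b ~~~ w}"
    then obtain a b where "u ~~~ a" "v ~~~ b" "a @ b ~~~ w" by (auto simp: raag_class_def)
    then have "u @ v ~~~ w" using eq_app eq_trans by blast
    then show "w \<in> raag_class V Adj (u @ v)" by (simp add: raag_class_def)
  next
    fix w assume "w \<in> raag_class V Adj (u @ v)"
    then show "w \<in> {w. \<exists>a\<in>raag_class V Adj u. \<exists>b\<in>raag_class V Adj v. a @ b ~~~ w}"
      by (auto simp: raag_class_def)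
  qed
  then show ?thesis by (simp add: RAAG_def)
qed

lemma RAAG_carrier: "carrier (RAAG V Adj) = raag_class V Adj ` words V"
  by (simp add: RAAG_def)

lemma RAAG_one: "\<one>\<^bsub>RAAG V Adj\<^esub> = raag_class V Adj []"
  by (simp add: RAAG_def)

lemma group_RAAG: "group (RAAG V Adj)"
proof (rule groupI)
  fix x y assume "x \<in> carrier (RAAG V Adj)" "y \<in> carrier (RAAG V Adj)"
  then show "x \<otimes>\<^bsub>RAAG V Adj\<^esub> y \<in> carrier (RAAG V Adj)"
    by (auto simp: RAAG_carrier RAAG_mult)
next
  show "\<one>\<^bsub>RAAG V Adj\<^esub> \<in> carrier (RAAG V Adj)" by (auto simp: RAAG_carrier RAAG_one)
next
  fix x y z assume "x \<in> carrier (RAAG V Adj)" "y \<in> carrier (RAAG V Adj)" "z \<in> carrier (RAAG V Adj)"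
  then show "x \<otimes>\<^bsub>RAAG V Adj\<^esub> y \<otimes>\<^bsub>RAAG V Adj\<^esub> z = x \<otimes>\<^bsub>RAAG V Adj\<^esub> (y \<otimes>\<^bsub>RAAG V Adj\<^esub> z)"
    by (auto simp: RAAG_carrier RAAG_mult)
next
  fix x assume "x \<in> carrier (RAAG V Adj)"
  then show "\<one>\<^bsub>RAAG V Adj\<^esub> \<otimes>\<^bsub>RAAG V Adj\<^esub> x = x"
    by (auto simp: RAAG_carrier RAAG_mult RAAG_one)
next
  fix x assume "x \<in> carrier (RAAG V Adj)"
  then obtain w where w: "w \<in> words V" "x = raag_class V Adj w" by (auto simp: RAAG_carrier)
  have "raag_class V Adj (inv_word w) \<otimes>\<^bsub>RAAG V Adj\<^esub> x = \<one>\<^bsub>RAAG V Adj\<^esub>"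
    using w cancel_word'[of w "[]" "[]"] by (simp add: RAAG_mult RAAG_one class_eq)
  then show "\<exists>y\<in>carrier (RAAG V Adj). y \<otimes>\<^bsub>RAAG V Adj\<^esub> x = \<one>\<^bsub>RAAG V Adj\<^esub>"
    using w by (auto simp: RAAG_carrier)
qed

lemma induced_class: assumes "good \<phi>" "w \<in> words V"
  shows "induced_map V Adj \<phi> (raag_class V Adj w) = raag_class V Adj (subst_word \<phi> w)"
proof -
  have "raag_class V Adj w \<in> carrier (RAAG V Adj)" using assms by (simp add: RAAG_carrier)
  then have "induced_map V Adj \<phi> (raag_class V Adj w) = {w'. \<exists>a\<in>raag_class V Adj w. subst_word \<phi> a ~~~ w'}"
    by (simp add: induced_map_def)
  also have "\<dots> = raag_class V Adj (subst_word \<phi> w)"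
  proof (rule Set.set_eqI, rule iffI)
    fix v assume "v \<in> {w'. \<exists>a\<in>raag_class V Adj w. subst_word \<phi> a ~~~ w'}"
    then obtain a where "w ~~~ a" "subst_word \<phi> a ~~~ v" by (auto simp: raag_class_def)
    then show "v \<in> raag_class V Adj (subst_word \<phi> w)"
      using good_eq[OF assms(1)] eq_trans by (simp add: raag_class_def) blast
  next
    fix v assume "v \<in> raag_class V Adj (subst_word \<phi> w)"
    then show "v \<in> {w'. \<exists>a\<in>raag_class V Adj w. subst_word \<phi> a ~~~ w'}"
      by (auto simp: raag_class_def)
  qed
  finally show ?thesis .
qed

lemma good_words: "good \<phi> \<Longrightarrow> w \<in> words V \<Longrightarrow> subst_word \<phi> w \<in> words V"
  using subst_words good_def by blast

lemma induced_hom: assumes "good \<phi>" shows "induced_map V Adj \<phi> \<in> hom (RAAG V Adj) (RAAG V Adj)"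
  unfolding hom_def
  using assms by (auto simp: RAAG_carrier RAAG_mult induced_class good_words)

lemma induced_ext: "induced_map V Adj \<phi> \<in> extensional (carrier (RAAG V Adj))"
  by (simp add: induced_map_def)

lemma good_comp: assumes "good \<phi>" "good \<psi>" shows "good (\<lambda>g. subst_word \<phi> (\<psi> g))"
proof -
  have "subst_word \<phi> (\<psi> u) @ subst_word \<phi> (\<psi> v) ~~~ subst_word \<phi> (\<psi> v) @ subst_word \<phi> (\<psi> u)"
    if "Adj u v" for u v
    using good_eq[OF assms(1), of "\<psi> u @ \<psi> v" "\<psi> v @ \<psi> u"] assms(2) that unfolding good_def by simp
  then show ?thesis using assms unfolding good_def by (auto simp: subst_words)
qed

lemma induced_compose: assumes "good \<phi>" "good \<psi>"
  shows "compose (carrier (RAAG V Adj)) (induced_map V Adj \<phi>) (induced_map V Adj \<psi>)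
       = induced_map V Adj (\<lambda>g. subst_word \<phi> (\<psi> g))"
proof (rule ext)
  fix A show "compose (carrier (RAAG V Adj)) (induced_map V Adj \<phi>) (induced_map V Adj \<psi>) A
       = induced_map V Adj (\<lambda>g. subst_word \<phi> (\<psi> g)) A"
  proof (cases "A \<in> carrier (RAAG V Adj)")
    case True
    then obtain w where w: "w \<in> words V" "A = raag_class V Adj w" by (auto simp: RAAG_carrier)
    then show ?thesis using assms good_comp[OF assms]
      by (simp add: compose_def induced_class good_words subst_subst RAAG_carrier)
  next
    case False then show ?thesis by (simp add: compose_def induced_map_def)
  qed
qed

lemma induced_id: "induced_map V Adj (\<lambda>g. [(g, False)]) = (\<lambda>x\<in>carrier (RAAG V Adj). x)"
proof (rule ext)
  fix A show "induced_map V Adj (\<lambda>g. [(g, False)]) A = (\<lambda>x\<in>carrier (RAAG V Adj). x) A"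
  proof (cases "A \<in> carrier (RAAG V Adj)")
    case True
    then obtain w where w: "w \<in> words V" "A = raag_class V Adj w" by (auto simp: RAAG_carrier)
    have "good (\<lambda>g. [(g, False)])" unfolding good_def using swap_eq[of "(_, False)" "(_, False)" "[]" "[]"] by auto
    then show ?thesis using w by (simp add: induced_class subst_id RAAG_carrier)
  next
    case False then show ?thesis by (simp add: induced_map_def)
  qed
qed

lemma induced_pointwise:
  assumes "\<forall>g\<in>V. \<phi> g ~~~ \<psi> g" "good \<phi>" "good \<psi>"
  shows "induced_map V Adj \<phi> = induced_map V Adj \<psi>"
proof (rule ext)
  fix A show "induced_map V Adj \<phi> A = induced_map V Adj \<psi> A"
  proof (cases "A \<in> carrier (RAAG V Adj)")
    case True
    then obtain w where w: "w \<in> words V" "A = raag_class V Adj w" by (auto simp: RAAG_carrier)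
    then show ?thesis using assms subst_pointwise[OF assms(1) _ _ w(1)]
      by (simp add: induced_class class_eq good_def)
  next
    case False then show ?thesis by (simp add: induced_map_def)
  qed
qed


end
context raag begin
abbreviation S where "S \<equiv> carrier (RAAG V Adj)"
abbreviation Aut where "Aut \<equiv> AutoGroup (RAAG V Adj)"

lemma group_Aut: "group Aut"
  using group.AutoGroup[OF group_RAAG] .

lemma Aut_carrier: "carrier Aut = auto (RAAG V Adj)"
  by (simp add: AutoGroup_def)

lemma Aut_mult: "f \<in> auto (RAAG V Adj) \<Longrightarrow> g \<in> auto (RAAG V Adj) \<Longrightarrow> f \<otimes>\<^bsub>Aut\<^esub> g = compose S f g"
proof -
  assume a: "f \<in> auto (RAAG V Adj)" "g \<in> auto (RAAG V Adj)"
  then have b: "f \<in> Bij S" "g \<in> Bij S" unfolding auto_def by blast+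
  have "f \<otimes>\<^bsub>Aut\<^esub> g = (\<lambda>g\<in>Bij S. \<lambda>f\<in>Bij S. compose S g f) f g"
    unfolding AutoGroup_def BijGroup_def by simp
  also have "\<dots> = compose S f g" using b by simp
  finally show ?thesis .
qed

lemma Aut_one: "\<one>\<^bsub>Aut\<^esub> = (\<lambda>x\<in>S. x)"
  by (simp add: AutoGroup_def BijGroup_def)

lemma good_gen: "good (\<lambda>g. [(g, False)])"
  unfolding good_def using swap_eq[of "(_, False)" "(_, False)" "[]" "[]"] by auto

lemma induced_auto:
  assumes "good \<phi>" "good \<psi>" "\<forall>g\<in>V. subst_word \<phi> (\<psi> g) ~~~ [(g, False)]"
    "\<forall>g\<in>V. subst_word \<psi> (\<phi> g) ~~~ [(g, False)]"
  shows "induced_map V Adj \<phi> \<in> auto (RAAG V Adj)"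
    "induced_map V Adj \<psi> \<in> auto (RAAG V Adj)"
    "inv\<^bsub>Aut\<^esub> (induced_map V Adj \<phi>) = induced_map V Adj \<psi>"
proof -
  let ?F = "induced_map V Adj \<phi>" and ?G = "induced_map V Adj \<psi>"
  have c1: "compose S ?F ?G = (\<lambda>x\<in>S. x)"
    using induced_compose[OF assms(1,2)] induced_pointwise[OF assms(3) good_comp[OF assms(1,2)] good_gen]
      induced_id by simp
  have c2: "compose S ?G ?F = (\<lambda>x\<in>S. x)"
    using induced_compose[OF assms(2,1)] induced_pointwise[OF assms(4) good_comp[OF assms(2,1)] good_gen]
      induced_id by simp
  have hF: "?F \<in> hom (RAAG V Adj) (RAAG V Adj)" and hG: "?G \<in> hom (RAAG V Adj) (RAAG V Adj)"
    using induced_hom assms by auto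
  then have fF: "?F \<in> S \<rightarrow> S" and fG: "?G \<in> S \<rightarrow> S" by (auto simp: hom_def)
  have gf: "?G (?F x) = x" if "x \<in> S" for x
    using fun_cong[OF c2, of x] that by (simp add: compose_def)
  have fg: "?F (?G x) = x" if "x \<in> S" for x
    using fun_cong[OF c1, of x] that by (simp add: compose_def)
  have bF: "bij_betw ?F S S" by (rule bij_betwI[OF fF fG gf fg])
  have bG: "bij_betw ?G S S" by (rule bij_betwI[OF fG fF fg gf])
  show aF: "?F \<in> auto (RAAG V Adj)" using hF bF induced_ext by (simp add: auto_def Bij_def)
  show aG: "?G \<in> auto (RAAG V Adj)" using hG bG induced_ext by (simp add: auto_def Bij_def)
  show "inv\<^bsub>Aut\<^esub> ?F = ?G"
    using group.inv_equality[OF group_Aut, of ?G ?F] aF aG c2 by (simp add: Aut_mult Aut_one Aut_carrier)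
qed

definition commw :: "'v word \<Rightarrow> 'v word \<Rightarrow> bool" where
  "commw p q \<longleftrightarrow> p @ q ~~~ q @ p"

lemma commw_sym: "commw p q \<Longrightarrow> commw q p"
  unfolding commw_def using eq_sym by blast

lemma commw_app: assumes "commw p q1" "commw p q2" shows "commw p (q1 @ q2)"
proof -
  have "p @ q1 @ q2 ~~~ q1 @ p @ q2" using eq_ctx[OF assms(1)[unfolded commw_def], of "[]" q2] by simp
  also have "\<dots> ~~~ q1 @ q2 @ p" using eq_ctx[OF assms(2)[unfolded commw_def], of q1 "[]"] by simp
  finally show ?thesis unfolding commw_def by simp
qed

lemma commw_nil: "commw p []" unfolding commw_def by simp

definition okl :: "'v letter \<Rightarrow> 'v letter \<Rightarrow> bool" where
  "okl l m \<longleftrightarrow> fst l = fst m \<or> Adj (fst l) (fst m)"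

lemma commw_letter: assumes "okl l m" "fst l \<in> V" shows "commw [l] [m]"
proof (cases "Adj (fst l) (fst m)")
  case True then show ?thesis using swap_eq[OF True, of "[]" "[]"] by (simp add: commw_def)
next
  case False
  then have e: "fst l = fst m" using assms okl_def by blast
  show ?thesis
  proof (cases "l = m")
    case True then show ?thesis by (simp add: commw_def)
  next
    case False
    then have "m = inv_letter l" using e by (cases l; cases m) (auto simp: inv_letter_def)
    then show ?thesis using cancel_eq[of l "[]" "[]"] cancel_eq[of m "[]" "[]"] assms e
      by (auto simp: commw_def intro: eq_trans eq_sym)
  qed
qed

lemma commw_letter_word: "fst l \<in> V \<Longrightarrow> \<forall>m\<in>set q. okl l m \<Longrightarrow> commw [l] q"
proof (induction q)
  case Nil then show ?case by (simp add: commw_nil)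
next
  case (Cons m q)
  then have 1: "commw [l] [m]" by (intro commw_letter) auto
  have 2: "commw [l] q" using Cons by simp
  show ?case using commw_app[OF 1 2] by simp
qed

lemma commw_letters: "p \<in> words V \<Longrightarrow> \<forall>l\<in>set p. \<forall>m\<in>set q. okl l m \<Longrightarrow> commw p q"
proof (induction p)
  case Nil then show ?case using commw_sym commw_nil by blast
next
  case (Cons l p)
  have 1: "commw [l] q" using Cons.prems by (intro commw_letter_word) auto
  have 2: "commw p q" using Cons by simp
  have "commw q ([l] @ p)" using commw_app[OF commw_sym[OF 1] commw_sym[OF 2]] .
  then show ?case using commw_sym by simp
qed

lemma commw_conj: assumes "commw p q" "w \<in> words V"
  shows "commw (inv_word w @ p @ w) (inv_word w @ q @ w)"
proof -
  have "(inv_word w @ p @ w) @ (inv_word w @ q @ w) ~~~ inv_word w @ p @ q @ w"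
    using cancel_word[OF assms(2), of "inv_word w @ p" "q @ w"] by simp
  also have "\<dots> ~~~ inv_word w @ q @ p @ w"
    using eq_ctx[OF assms(1)[unfolded commw_def], of "inv_word w" w] by simp
  also have "\<dots> ~~~ (inv_word w @ q @ w) @ (inv_word w @ p @ w)"
    using eq_sym[OF cancel_word[OF assms(2), of "inv_word w @ q" "p @ w"]] by simp
  finally show ?thesis unfolding commw_def .
qed

lemma goodI: assumes "\<forall>g\<in>V. \<phi> g \<in> words V" "\<And>u v. Adj u v \<Longrightarrow> commw (\<phi> u) (\<phi> v)"
  shows "good \<phi>"
  using assms unfolding good_def commw_def by blast

lemma send_False: "send_letter (b, False) w = (\<lambda>g. if g = b then w else [(g, False)])"
  by (simp add: send_letter_def fun_eq_iff)

lemma okl_simp: "okl l m \<longleftrightarrow> fst l = fst m \<or> Adj (fst l) (fst m)" by (simp add: okl_def)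

lemma good_single:
  assumes "b \<in> V" "w \<in> words V" "\<And>v. Adj b v \<Longrightarrow> \<forall>l\<in>set w. okl l (v, False)"
  shows "good (\<lambda>g. if g = b then w else [(g, False)])"
proof (rule goodI)
  show "\<forall>g\<in>V. (if g = b then w else [(g, False)]) \<in> words V" using assms by auto
next
  fix u v assume a: "Adj u v"
  note ad = adjD[OF a]
  show "commw (if u = b then w else [(u, False)]) (if v = b then w else [(v, False)])"
  proof (cases "u = b")
    case True
    then have "v \<noteq> b" using ad by auto
    then show ?thesis using True commw_letters[OF assms(2), of "[(v, False)]"] assms(3) a by simp
  next
    case False
    show ?thesis
    proof (cases "v = b")
      case True
      then have "commw w [(u, False)]" using commw_letters[OF assms(2), of "[(u, False)]"] assms(3) ad by simp
      then show ?thesis using True False commw_sym by simp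
    next
      case F2: False
      then show ?thesis using False ad a commw_letter[of "(u, False)" "(v, False)"] by (simp add: okl_def)
    qed
  qed
qed

lemma lk_dom: "dominates Adj a b \<Longrightarrow> Adj b v \<Longrightarrow> v = a \<or> Adj a v"
  unfolding dominates_def lk_def st_def by auto

lemma good_transv:
  assumes "a \<in> V" "b \<in> V" "dominates Adj a b"
  shows "good (\<lambda>g. if g = b then [(b, False), (a, s)] else [(g, False)])"
  using assms by (intro good_single) (auto simp: okl_def dest: lk_dom adjD)

lemma good_conj_one:
  assumes "x \<in> V" "c \<in> V" "dominates Adj x c"
  shows "good (\<lambda>g. if g = c then [(x, \<not>s), (c, False), (x, s)] else [(g, False)])"
  using assms by (intro good_single) (auto simp: okl_def dest: lk_dom adjD)

lemma good_comm_transv: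
  assumes "x \<in> V" "y \<in> V" "c \<in> V" "dominates Adj x c" "dominates Adj y c"
  shows "good (\<lambda>g. if g = c then [(c, False), (x, \<not>s), (y, \<not>t), (x, s), (y, t)] else [(g, False)])"
  using assms by (intro good_single) (auto simp: okl_def dest: lk_dom adjD)

lemma good_inner:
  assumes "w \<in> words V"
  shows "good (\<lambda>g. inv_word w @ [(g, False)] @ w)"
proof (rule goodI)
  show "\<forall>g\<in>V. inv_word w @ [(g, False)] @ w \<in> words V" using assms by auto
next
  fix u v assume "Adj u v"
  then have "commw [(u, False)] [(v, False)]" using commw_letter adjD by (simp add: okl_def)
  then show "commw (inv_word w @ [(u, False)] @ w) (inv_word w @ [(v, False)] @ w)"
    by (rule commw_conj[OF _ assms])
qed

lemma uoc_adj: assumes "union_of_components V Adj x Y" "p \<in> Y" "Adj p q" "q \<notin> Y"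
  shows "Adj x q"
proof -
  have pY: "p \<in> V - st Adj x" using assms unfolding union_of_components_def by auto
  have "q \<in> st Adj x"
  proof (rule ccontr)
    assume "q \<notin> st Adj x"
    then have "q \<in> V - st Adj x" using adjD[OF assms(3)] by auto
    then have "(\<lambda>s t. s \<in> V - st Adj x \<and> t \<in> V - st Adj x \<and> Adj s t)\<^sup>*\<^sup>* p q"
      using pY assms(3) by auto
    then show False using assms unfolding union_of_components_def by blast
  qed
  moreover have "q \<noteq> x"
  proof
    assume "q = x" then have "p \<in> st Adj x" using assms(3) adjD[OF assms(3)] by (auto simp: st_def lk_def)
    then show False using pY by auto
  qed
  ultimately show ?thesis by (simp add: st_def lk_def)
qed

lemma good_pconj:
  assumes "x \<in> V" "union_of_components V Adj x Y"
  shows "good (\<lambda>g. if g \<in> Y then [(x, \<not>s), (g, False), (x, s)] else [(g, False)])"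
proof (rule goodI)
  have "Y \<subseteq> V" using assms(2) unfolding union_of_components_def by auto
  then show "\<forall>g\<in>V. (if g \<in> Y then [(x, \<not>s), (g, False), (x, s)] else [(g, False)]) \<in> words V"
    using assms by auto
next
  fix u v assume a: "Adj u v"
  note ad = adjD[OF a]
  have cuv: "commw [(u, False)] [(v, False)]" using commw_letter a ad by (simp add: okl_def)
  have iw: "inv_word [(x, s)] = [(x, \<not>s)]" by (simp add: inv_letter_def)
  show "commw (if u \<in> Y then [(x, \<not>s), (u, False), (x, s)] else [(u, False)])
              (if v \<in> Y then [(x, \<not>s), (v, False), (x, s)] else [(v, False)])"
  proof (cases "u \<in> Y"; cases "v \<in> Y")
    assume "u \<in> Y" "v \<in> Y"
    then show ?thesis using commw_conj[OF cuv, of "[(x, s)]"] assms iw by simp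
  next
    assume h: "u \<in> Y" "v \<notin> Y"
    then have "Adj x v" using uoc_adj assms a by blast
    then show ?thesis using h commw_letters[of "[(x, \<not>s), (u, False), (x, s)]" "[(v, False)]"] assms ad a
      by (simp add: okl_def)
  next
    assume h: "u \<notin> Y" "v \<in> Y"
    then have "Adj x u" using uoc_adj assms ad by blast
    then show ?thesis using h commw_letters[of "[(x, \<not>s), (v, False), (x, s)]" "[(u, False)]"] assms ad a
        commw_sym by (simp add: okl_def)
  next
    assume h: "u \<notin> Y" "v \<notin> Y"
    then show ?thesis using cuv by simp
  qed
qed

definition Tm :: "'v \<Rightarrow> bool \<Rightarrow> 'v \<Rightarrow> 'v \<Rightarrow> 'v word" where
  "Tm a s b = (\<lambda>g. if g = b then [(b, False), (a, s)] else [(g, False)])"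
definition Cm :: "'v \<Rightarrow> bool \<Rightarrow> 'v \<Rightarrow> 'v \<Rightarrow> 'v word" where
  "Cm x s c = (\<lambda>g. if g = c then [(x, \<not>s), (c, False), (x, s)] else [(g, False)])"
definition CTm :: "'v \<Rightarrow> bool \<Rightarrow> 'v \<Rightarrow> bool \<Rightarrow> 'v \<Rightarrow> 'v \<Rightarrow> 'v word" where
  "CTm x s y t c = (\<lambda>g. if g = c then [(c, False), (x, \<not>s), (y, \<not>t), (x, s), (y, t)] else [(g, False)])"
definition Pm :: "'v \<Rightarrow> bool \<Rightarrow> 'v set \<Rightarrow> 'v \<Rightarrow> 'v word" where
  "Pm x s Y = (\<lambda>g. if g \<in> Y then [(x, \<not>s), (g, False), (x, s)] else [(g, False)])"
definition Im :: "'v word \<Rightarrow> 'v \<Rightarrow> 'v word" where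
  "Im w = (\<lambda>g. inv_word w @ [(g, False)] @ w)"

lemma inv_letter_pair[simp]: "inv_letter (x, s) = (x, \<not>s)" by (simp add: inv_letter_def)

lemma transvection_eq: "transvection V Adj (a, s) (b, False) = induced_map V Adj (Tm a s b)"
  by (simp add: transvection_def send_False Tm_def)
lemma conj_one_eq: "conj_one V Adj (x, s) (c, False) = induced_map V Adj (Cm x s c)"
  by (simp add: conj_one_def send_False Cm_def inv_letter_def)
lemma comm_transvection_eq: "comm_transvection V Adj (x, s) (y, t) (c, False) = induced_map V Adj (CTm x s y t c)"
  by (simp add: comm_transvection_def send_False CTm_def inv_letter_def)
lemma partial_conj_eq: "partial_conj V Adj (x, s) Y = induced_map V Adj (Pm x s Y)"
  unfolding partial_conj_def Pm_def by (intro arg_cong[where f="induced_map V Adj"] ext) (simp add: inv_letter_def)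
lemma inner_aut_eq: "inner_aut V Adj w = induced_map V Adj (Im w)"
  by (simp add: inner_aut_def Im_def)

lemma Tm_auto: assumes "a \<in> V" "b \<in> V" "a \<noteq> b" "dominates Adj a b"
  shows "induced_map V Adj (Tm a s b) \<in> auto (RAAG V Adj)"
    "inv\<^bsub>Aut\<^esub> (induced_map V Adj (Tm a s b)) = induced_map V Adj (Tm a (\<not>s) b)"
proof -
  have g: "good (Tm a s b)" "good (Tm a (\<not>s) b)" unfolding Tm_def using good_transv assms by auto
  have p: "\<forall>g\<in>V. subst_word (Tm a s' b) (Tm a (\<not>s') b g) ~~~ [(g, False)]" for s'
    using assms by (intro ballI red_same) (auto simp: Tm_def inv_letter_def)
  show "induced_map V Adj (Tm a s b) \<in> auto (RAAG V Adj)"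
    "inv\<^bsub>Aut\<^esub> (induced_map V Adj (Tm a s b)) = induced_map V Adj (Tm a (\<not>s) b)"
    using induced_auto[OF g p[of s] p[of "\<not>s", simplified]] by auto
qed

lemma Cm_auto: assumes "x \<in> V" "c \<in> V" "x \<noteq> c" "dominates Adj x c"
  shows "induced_map V Adj (Cm x s c) \<in> auto (RAAG V Adj)"
    "inv\<^bsub>Aut\<^esub> (induced_map V Adj (Cm x s c)) = induced_map V Adj (Cm x (\<not>s) c)"
proof -
  have g: "good (Cm x s c)" "good (Cm x (\<not>s) c)" unfolding Cm_def using good_conj_one assms by auto
  have p: "\<forall>g\<in>V. subst_word (Cm x s' c) (Cm x (\<not>s') c g) ~~~ [(g, False)]" for s'
    using assms by (intro ballI red_same) (auto simp: Cm_def inv_letter_def)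
  show "induced_map V Adj (Cm x s c) \<in> auto (RAAG V Adj)"
    "inv\<^bsub>Aut\<^esub> (induced_map V Adj (Cm x s c)) = induced_map V Adj (Cm x (\<not>s) c)"
    using induced_auto[OF g p[of s] p[of "\<not>s", simplified]] by auto
qed

lemma CTm_auto: assumes "x \<in> V" "y \<in> V" "c \<in> V" "distinct [x, y, c]" "dominates Adj x c" "dominates Adj y c"
  shows "induced_map V Adj (CTm x s y t c) \<in> auto (RAAG V Adj)"
proof -
  have g: "good (CTm x s y t c)" "good (CTm y t x s c)" unfolding CTm_def using good_comm_transv assms by auto
  have p: "\<forall>g\<in>V. subst_word (CTm x s y t c) (CTm y t x s c g) ~~~ [(g, False)]"
    "\<forall>g\<in>V. subst_word (CTm y t x s c) (CTm x s y t c g) ~~~ [(g, False)]"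
    using assms by (intro ballI red_same; auto simp: CTm_def inv_letter_def)+
  show ?thesis using induced_auto[OF g p] by auto
qed

lemma Pm_auto: assumes "x \<in> V" "union_of_components V Adj x Y"
  shows "induced_map V Adj (Pm x s Y) \<in> auto (RAAG V Adj)"
proof -
  have Y: "Y \<subseteq> V" "x \<notin> Y" using assms(2) unfolding union_of_components_def st_def by auto
  have g: "good (Pm x s Y)" "good (Pm x (\<not>s) Y)" unfolding Pm_def using good_pconj assms by auto
  have p: "\<forall>g\<in>V. subst_word (Pm x s' Y) (Pm x (\<not>s') Y g) ~~~ [(g, False)]" for s'
    using assms Y by (intro ballI red_same) (auto simp: Pm_def inv_letter_def)
  show ?thesis using induced_auto[OF g p[of s] p[of "\<not>s", simplified]] by auto
qed

lemma Im_auto: assumes "x \<in> V"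
  shows "induced_map V Adj (Im [(x, False)]) \<in> auto (RAAG V Adj)"
proof -
  have gi: "good (Im w)" if "w \<in> words V" for w unfolding Im_def using good_inner that by blast
  have g: "good (Im [(x, False)])" "good (Im [(x, True)])" using gi assms by auto
  have p: "\<forall>g\<in>V. subst_word (Im [(x, False)]) (Im [(x, True)] g) ~~~ [(g, False)]"
    "\<forall>g\<in>V. subst_word (Im [(x, True)]) (Im [(x, False)] g) ~~~ [(g, False)]"
    using assms by (intro ballI red_same; auto simp: Im_def inv_letter_def)+
  show ?thesis using induced_auto[OF g p] by auto
qed

lemma prod2: assumes "good \<phi>1" "good \<phi>2" "induced_map V Adj \<phi>1 \<in> auto (RAAG V Adj)"
  "induced_map V Adj \<phi>2 \<in> auto (RAAG V Adj)"
  shows "induced_map V Adj \<phi>1 \<otimes>\<^bsub>Aut\<^esub> induced_map V Adj \<phi>2 = induced_map V Adj (\<lambda>g. subst_word \<phi>1 (\<phi>2 g))"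
    "induced_map V Adj (\<lambda>g. subst_word \<phi>1 (\<phi>2 g)) \<in> auto (RAAG V Adj)"
proof -
  show e: "induced_map V Adj \<phi>1 \<otimes>\<^bsub>Aut\<^esub> induced_map V Adj \<phi>2 = induced_map V Adj (\<lambda>g. subst_word \<phi>1 (\<phi>2 g))"
    using Aut_mult[OF assms(3,4)] induced_compose[OF assms(1,2)] by simp
  show "induced_map V Adj (\<lambda>g. subst_word \<phi>1 (\<phi>2 g)) \<in> auto (RAAG V Adj)"
    using monoid.m_closed[OF group.is_monoid[OF group_Aut], of "induced_map V Adj \<phi>1" "induced_map V Adj \<phi>2"] assms(3,4) e
    by (simp add: Aut_carrier)
qed

lemma prod3: assumes "good \<phi>1" "good \<phi>2" "good \<phi>3" "induced_map V Adj \<phi>1 \<in> auto (RAAG V Adj)"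
  "induced_map V Adj \<phi>2 \<in> auto (RAAG V Adj)" "induced_map V Adj \<phi>3 \<in> auto (RAAG V Adj)"
  shows "induced_map V Adj \<phi>1 \<otimes>\<^bsub>Aut\<^esub> induced_map V Adj \<phi>2 \<otimes>\<^bsub>Aut\<^esub> induced_map V Adj \<phi>3
     = induced_map V Adj (\<lambda>g. subst_word \<phi>1 (subst_word \<phi>2 (\<phi>3 g)))"
proof -
  have "induced_map V Adj \<phi>1 \<otimes>\<^bsub>Aut\<^esub> induced_map V Adj \<phi>2 \<otimes>\<^bsub>Aut\<^esub> induced_map V Adj \<phi>3
     = induced_map V Adj (\<lambda>g. subst_word (\<lambda>h. subst_word \<phi>1 (\<phi>2 h)) (\<phi>3 g))"
    using prod2[OF assms(1,2,4,5)] prod2[OF good_comp[OF assms(1,2)] assms(3) _ assms(6)] by simp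
  then show ?thesis by (simp add: subst_subst)
qed

lemma dom_trans: assumes "dominates Adj x y" "dominates Adj y z" "x \<noteq> y" "y \<noteq> z" "x \<noteq> z"
  shows "dominates Adj x z"
  unfolding dominates_def
proof
  fix v assume v: "v \<in> lk Adj z"
  then have "v \<in> st Adj y" using assms(2) unfolding dominates_def by auto
  then show "v \<in> st Adj x"
  proof (cases "v = y")
    case True
    then have "Adj z y" using v by (simp add: lk_def)
    then have "z \<in> lk Adj y" using adjD by (auto simp: lk_def)
    then have "z \<in> st Adj x" using assms(1) unfolding dominates_def by auto
    then have "Adj x z" using assms(5) by (auto simp: st_def lk_def)
    then have "x \<in> lk Adj z" using adjD by (auto simp: lk_def)
    then have "x \<in> st Adj y" using assms(2) unfolding dominates_def by auto
    then have "Adj y x" using assms(3) by (auto simp: st_def lk_def)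
    then show ?thesis using True adjD by (auto simp: st_def lk_def)
  next
    case False
    then have "v \<in> lk Adj y" using \<open>v \<in> st Adj y\<close> by (simp add: st_def)
    then show ?thesis using assms(1) unfolding dominates_def by auto
  qed
qed

lemma K_incl: "f \<in> K_gens V Adj Z \<Longrightarrow> f \<in> K_sub V Adj Z"
  unfolding K_sub_def by (rule generate.incl)
lemma K_mult: "f \<in> K_sub V Adj Z \<Longrightarrow> g \<in> K_sub V Adj Z \<Longrightarrow> f \<otimes>\<^bsub>Aut\<^esub> g \<in> K_sub V Adj Z"
  unfolding K_sub_def by (rule generate.eng)

lemma K_Cm: "x \<in> Z \<Longrightarrow> c \<in> Z \<Longrightarrow> x \<noteq> c \<Longrightarrow> dominates Adj x c \<Longrightarrow> induced_map V Adj (Cm x False c) \<in> K_sub V Adj Z"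
proof -
  assume h: "x \<in> Z" "c \<in> Z" "x \<noteq> c" "dominates Adj x c"
  have "conj_one V Adj (x, False) (c, False) \<in> K_gens V Adj Z"
    unfolding K_gens_def
    apply (rule UnI1, rule UnI2, rule CollectI)
    apply (rule exI[of _ "(x, False)"], rule exI[of _ "(c, False)"])
    using h by simp
  then show ?thesis using conj_one_eq[of x False c] K_incl by simp
qed
lemma K_CTm: "x \<in> Z \<Longrightarrow> y \<in> Z \<Longrightarrow> c \<in> Z \<Longrightarrow> distinct [x, y, c] \<Longrightarrow> dominates Adj x c \<Longrightarrow> dominates Adj y c
   \<Longrightarrow> induced_map V Adj (CTm x s y t c) \<in> K_sub V Adj Z"
proof -
  assume h: "x \<in> Z" "y \<in> Z" "c \<in> Z" "distinct [x, y, c]" "dominates Adj x c" "dominates Adj y c"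
  have "comm_transvection V Adj (x, s) (y, t) (c, False) \<in> K_gens V Adj Z"
    unfolding K_gens_def
    apply (rule UnI1, rule UnI1, rule CollectI)
    apply (rule exI[of _ "(x, s)"], rule exI[of _ "(y, t)"], rule exI[of _ "(c, False)"])
    using h by simp
  then show ?thesis using comm_transvection_eq[of x s y t c] K_incl by simp
qed
lemma K_Im: "w \<in> words V \<Longrightarrow> induced_map V Adj (Im w) \<in> K_sub V Adj Z"
  using inner_aut_eq[of w] by (intro K_incl) (auto simp: K_gens_def)

lemma Tm_good: "a \<in> V \<Longrightarrow> b \<in> V \<Longrightarrow> dominates Adj a b \<Longrightarrow> good (Tm a s b)"
  unfolding Tm_def using good_transv by blast
lemma Cm_good: "x \<in> V \<Longrightarrow> c \<in> V \<Longrightarrow> dominates Adj x c \<Longrightarrow> good (Cm x s c)"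
  unfolding Cm_def using good_conj_one by blast
lemma CTm_good: "x \<in> V \<Longrightarrow> y \<in> V \<Longrightarrow> c \<in> V \<Longrightarrow> dominates Adj x c \<Longrightarrow> dominates Adj y c \<Longrightarrow> good (CTm x s y t c)"
  unfolding CTm_def using good_comm_transv by blast
lemma Pm_good: "x \<in> V \<Longrightarrow> union_of_components V Adj x Y \<Longrightarrow> good (Pm x s Y)"
  unfolding Pm_def using good_pconj by blast
lemma Im_good: "w \<in> words V \<Longrightarrow> good (Im w)"
  unfolding Im_def using good_inner by blast

lemma part1:
  assumes "a \<in> V" "b \<in> V" "c \<in> V" "x \<in> V"
    and dab: "dominates Adj a b" and "a \<noteq> b" and dxc: "dominates Adj x c" and "x \<noteq> c"
  shows "induced_map V Adj (Tm a False b) \<otimes>\<^bsub>Aut\<^esub> induced_map V Adj (Cm x False c)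
     \<otimes>\<^bsub>Aut\<^esub> inv\<^bsub>Aut\<^esub> induced_map V Adj (Tm a False b) \<in> K_sub V Adj {a, b, c, x}"
proof -
  note TA = Tm_auto[OF assms(1,2,6,5)]
  have e: "induced_map V Adj (Tm a False b) \<otimes>\<^bsub>Aut\<^esub> induced_map V Adj (Cm x False c)
     \<otimes>\<^bsub>Aut\<^esub> inv\<^bsub>Aut\<^esub> induced_map V Adj (Tm a False b)
     = induced_map V Adj (\<lambda>g. subst_word (Tm a False b) (subst_word (Cm x False c) (Tm a True b g)))"
    (is "_ = induced_map V Adj ?\<Phi>")
    using prod3[OF Tm_good Cm_good Tm_good TA(1) Cm_auto(1) TA(1)[of True]] TA(2) assms by simp
  have g\<Phi>: "good ?\<Phi>" using good_comp[OF Tm_good good_comp[OF Cm_good Tm_good]] assms by blast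
  consider "b = c" | "b = x" | "b \<noteq> c" "b \<noteq> x" by blast
  then show ?thesis
  proof cases
    case 1
    show ?thesis
    proof (cases "x = a")
      case True
      have "induced_map V Adj ?\<Phi> = induced_map V Adj (Cm x False c)"
        using assms 1 True by (intro induced_pointwise g\<Phi> Cm_good ballI red_same) (auto simp: Tm_def Cm_def)
      then show ?thesis using e K_Cm[of x "{a,b,c,x}" c] assms by simp
    next
      case False
      let ?CT = "CTm x False a True b"
      have "induced_map V Adj ?\<Phi> = induced_map V Adj (\<lambda>g. subst_word (Cm x False c) (?CT g))"
        using assms 1 False by (intro induced_pointwise g\<Phi> good_comp Cm_good CTm_good ballI red_same)
          (auto simp: Tm_def Cm_def CTm_def)
      also have "\<dots> = induced_map V Adj (Cm x False c) \<otimes>\<^bsub>Aut\<^esub> induced_map V Adj ?CT"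
        using prod2(1)[OF Cm_good CTm_good Cm_auto(1) CTm_auto] assms 1 False by simp
      finally show ?thesis using e K_mult[OF K_Cm K_CTm] assms 1 False by simp
    qed
  next
    case 2
    show ?thesis
    proof (cases "c = a")
      case True
      have "induced_map V Adj ?\<Phi> = induced_map V Adj (\<lambda>g. subst_word (Cm a False x) (Cm x False c g))"
        using assms 2 True by (intro induced_pointwise g\<Phi> good_comp Cm_good ballI red_same)
          (auto simp: Tm_def Cm_def)
      also have "\<dots> = induced_map V Adj (Cm a False x) \<otimes>\<^bsub>Aut\<^esub> induced_map V Adj (Cm x False c)"
        using prod2(1)[OF Cm_good Cm_good Cm_auto(1) Cm_auto(1)] assms 2 True by simp
      finally show ?thesis using e K_mult[OF K_Cm K_Cm] assms 2 True by simp
    next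
      case False
      have dac: "dominates Adj a c" using dom_trans[of a x c] assms 2 False by simp
      have "induced_map V Adj ?\<Phi> = induced_map V Adj (\<lambda>g. subst_word (Cm x False c) (Cm a False c g))"
        using assms 2 False dac by (intro induced_pointwise g\<Phi> good_comp Cm_good ballI red_same)
          (auto simp: Tm_def Cm_def)
      also have "\<dots> = induced_map V Adj (Cm x False c) \<otimes>\<^bsub>Aut\<^esub> induced_map V Adj (Cm a False c)"
        using prod2(1)[OF Cm_good Cm_good Cm_auto(1) Cm_auto(1)] assms 2 False dac by simp
      finally show ?thesis using e K_mult[OF K_Cm K_Cm] assms 2 False dac by simp
    qed
  next
    case 3
    show ?thesis
    proof (cases "a = c")
      case True
      have dxb: "dominates Adj x b" using dom_trans[of x a b] assms 3 True by simp
      let ?CT = "CTm a True x False b"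
      have "induced_map V Adj ?\<Phi> = induced_map V Adj (\<lambda>g. subst_word ?CT (Cm x False c g))"
        using assms 3 True dxb by (intro induced_pointwise g\<Phi> good_comp Cm_good CTm_good ballI red_same)
          (auto simp: Tm_def Cm_def CTm_def)
      also have "\<dots> = induced_map V Adj ?CT \<otimes>\<^bsub>Aut\<^esub> induced_map V Adj (Cm x False c)"
        using prod2(1)[OF CTm_good Cm_good CTm_auto Cm_auto(1)] assms 3 True dxb by simp
      finally show ?thesis using e K_mult[OF K_CTm K_Cm] assms 3 True dxb by simp
    next
      case False
      have "induced_map V Adj ?\<Phi> = induced_map V Adj (Cm x False c)"
        using assms 3 False by (intro induced_pointwise g\<Phi> Cm_good ballI red_same) (auto simp: Tm_def Cm_def)
      then show ?thesis using e K_Cm[of x "{a,b,c,x}" c] assms by simp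
    qed
  qed
qed

lemma part3:
  assumes "a \<in> V" "b \<in> V" "x \<in> V" and dab: "dominates Adj a b" and "a \<noteq> b"
  shows "induced_map V Adj (Tm a False b) \<otimes>\<^bsub>Aut\<^esub> induced_map V Adj (Im [(x, False)])
     \<otimes>\<^bsub>Aut\<^esub> inv\<^bsub>Aut\<^esub> induced_map V Adj (Tm a False b) \<in> K_sub V Adj Z"
proof -
  note TA = Tm_auto[OF assms(1,2,5,4)]
  have wx: "[(x, False)] \<in> words V" using assms by simp
  have e: "induced_map V Adj (Tm a False b) \<otimes>\<^bsub>Aut\<^esub> induced_map V Adj (Im [(x, False)])
     \<otimes>\<^bsub>Aut\<^esub> inv\<^bsub>Aut\<^esub> induced_map V Adj (Tm a False b)
     = induced_map V Adj (\<lambda>g. subst_word (Tm a False b) (subst_word (Im [(x, False)]) (Tm a True b g)))"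
    (is "_ = induced_map V Adj ?\<Phi>")
    using prod3[OF Tm_good Im_good[OF wx] Tm_good TA(1) Im_auto TA(1)[of True]] TA(2) assms by simp
  have g\<Phi>: "good ?\<Phi>" using good_comp[OF Tm_good good_comp[OF Im_good[OF wx] Tm_good]] assms by blast
  have w: "Tm a False b x \<in> words V" using assms by (simp add: Tm_def)
  have "induced_map V Adj ?\<Phi> = induced_map V Adj (Im (Tm a False b x))"
    using assms by (intro induced_pointwise g\<Phi> Im_good[OF w] ballI red_same) (auto simp: Tm_def Im_def)
  then show ?thesis using e K_Im[OF w] by simp
qed

lemma uoc_step: "union_of_components V Adj x Y \<Longrightarrow> p \<in> Y \<Longrightarrow> q \<in> V - st Adj x \<Longrightarrow> Adj p q \<Longrightarrow> q \<in> Y"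
  unfolding union_of_components_def
proof -
  assume h: "Y \<subseteq> V - st Adj x \<and> (\<forall>p\<in>Y. \<forall>q. (\<lambda>s t. s \<in> V - st Adj x \<and> t \<in> V - st Adj x \<and> Adj s t)\<^sup>*\<^sup>* p q \<longrightarrow> q \<in> Y)"
    "p \<in> Y" "q \<in> V - st Adj x" "Adj p q"
  then have "(\<lambda>s t. s \<in> V - st Adj x \<and> t \<in> V - st Adj x \<and> Adj s t)\<^sup>*\<^sup>* p q" by auto
  then show "q \<in> Y" using h by blast
qed

lemma uoc_sub: "union_of_components V Adj x Y \<Longrightarrow> Y \<subseteq> V - st Adj x"
  unfolding union_of_components_def by blast

lemma uoc_new:
  assumes u: "union_of_components V Adj x Y" and d: "dominates Adj a x" and xV: "x \<in> V"
    and W: "W = Y \<or> W = Y \<union> {x}"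
  shows "union_of_components V Adj a (W - st Adj a)"
proof -
  have Ys: "Y \<subseteq> V - st Adj x" using uoc_sub[OF u] .
  have WV: "W \<subseteq> V" using Ys W xV by auto
  have "q \<in> W - st Adj a" if "p \<in> W - st Adj a"
      "(\<lambda>s t. s \<in> V - st Adj a \<and> t \<in> V - st Adj a \<and> Adj s t)\<^sup>*\<^sup>* p q" for p q
    using that(2,1)
  proof (induction rule: rtranclp_induct)
    case base then show ?case .
  next
    case (step r q')
    then have r: "r \<in> W - st Adj a" and q': "q' \<in> V - st Adj a" "Adj r q'" by auto
    have nlk: "q' \<notin> lk Adj x" using q' d unfolding dominates_def by auto
    have "r \<noteq> x"
    proof
      assume "r = x" then have "q' \<in> lk Adj x" using q' by (simp add: lk_def)
      then show False using nlk by simp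
    qed
    then have rY: "r \<in> Y" using r W by auto
    have "q' \<noteq> x"
    proof
      assume "q' = x" then have "r \<in> lk Adj x" using q' adjD by (auto simp: lk_def)
      then show False using rY Ys by (auto simp: st_def)
    qed
    then have "q' \<in> V - st Adj x" using q' nlk by (auto simp: st_def)
    then have "q' \<in> Y" using uoc_step[OF u rY _ q'(2)] by blast
    then show ?case using q' W by auto
  qed
  then show ?thesis unfolding union_of_components_def using WV by blast
qed

lemma conj_triv: assumes "w \<in> words V" "fst l \<in> V" "commw w [l]"
  shows "inv_letter l # w @ [l] ~~~ w"
proof -
  have "[inv_letter l] @ (w @ [l]) @ [] ~~~ [inv_letter l] @ ([l] @ w) @ []"
    using assms(3) unfolding commw_def by (rule eq_ctx)
  moreover have "inv_letter l # l # w ~~~ w"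
    using cancel_eq[of "inv_letter l" "[]" w] assms(2) by (simp add: inv_letter_def)
  ultimately show ?thesis using eq_trans by simp
qed

lemma fold1: "f \<in> auto (RAAG V Adj) \<Longrightarrow> foldr (\<lambda>f g. f \<otimes>\<^bsub>Aut\<^esub> g) [f] \<one>\<^bsub>Aut\<^esub> = f"
  using monoid.r_one[OF group.is_monoid[OF group_Aut]] by (simp add: Aut_carrier)
lemma fold2: "f1 \<in> auto (RAAG V Adj) \<Longrightarrow> f2 \<in> auto (RAAG V Adj) \<Longrightarrow>
  foldr (\<lambda>f g. f \<otimes>\<^bsub>Aut\<^esub> g) [f1, f2] \<one>\<^bsub>Aut\<^esub> = f1 \<otimes>\<^bsub>Aut\<^esub> f2"
  using monoid.r_one[OF group.is_monoid[OF group_Aut]] by (simp add: Aut_carrier)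

lemma part2:
  assumes aV: "a \<in> V" and bV: "b \<in> V" and xV: "x \<in> V" and dab: "dominates Adj a b" and ab: "a \<noteq> b"
    and u: "union_of_components V Adj x Y"
  shows "\<exists>fs. set fs \<subseteq> K_sub V Adj {a, b, x} \<union>
              {partial_conj V Adj (z, False) Y' | z Y'.
                 z \<in> {a, x} \<and> Y' \<subseteq> Y \<union> {x, a} \<and> union_of_components V Adj z Y'}
        \<and> induced_map V Adj (Tm a False b) \<otimes>\<^bsub>Aut\<^esub> induced_map V Adj (Pm x False Y)
            \<otimes>\<^bsub>Aut\<^esub> inv\<^bsub>Aut\<^esub> induced_map V Adj (Tm a False b)
          = foldr (\<lambda>f g. f \<otimes>\<^bsub>Aut\<^esub> g) fs \<one>\<^bsub>Aut\<^esub>"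
    (is "\<exists>fs. set fs \<subseteq> ?SS \<and> ?L = _")
proof -
  note TA = Tm_auto[OF aV bV ab dab]
  have Ys: "Y \<subseteq> V - st Adj x" using uoc_sub[OF u] .
  then have xY: "x \<notin> Y" and YV: "Y \<subseteq> V" by (auto simp: st_def)
  have e: "?L = induced_map V Adj (\<lambda>g. subst_word (Tm a False b) (subst_word (Pm x False Y) (Tm a True b g)))"
    (is "_ = induced_map V Adj ?\<Phi>")
    using prod3[OF Tm_good Pm_good[OF xV u] Tm_good TA(1) Pm_auto[OF xV u] TA(1)[of True]] TA(2) aV bV dab by simp
  have g\<Phi>: "good ?\<Phi>" using good_comp[OF Tm_good good_comp[OF Pm_good[OF xV u] Tm_good]] aV bV dab by blast
  have PA: "induced_map V Adj (Pm x False Y) \<in> auto (RAAG V Adj)" using Pm_auto[OF xV u] .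
  have PG: "good (Pm x False Y)" using Pm_good[OF xV u] .
  have PS: "induced_map V Adj (Pm x False Y) \<in> ?SS"
    apply (rule UnI2, rule CollectI)
    apply (rule exI[of _ x], rule exI[of _ Y])
    using u partial_conj_eq[of x False Y] by auto
  have PaS: "induced_map V Adj (Pm a False W) \<in> ?SS" if "W \<subseteq> Y \<union> {x, a}" "union_of_components V Adj a W" for W
    apply (rule UnI2, rule CollectI)
    apply (rule exI[of _ a], rule exI[of _ W])
    using that partial_conj_eq[of a False W] by auto
  show ?thesis
  proof (cases "b = x")
    case False
    note bx = False
    consider "(b \<in> Y \<longleftrightarrow> a \<in> Y) \<or> a = x" | "b \<in> Y" "a \<notin> Y" "a \<noteq> x" "Adj a x"
      | "b \<in> Y" "a \<notin> Y" "a \<noteq> x" "\<not> Adj a x" | "b \<notin> Y" "a \<in> Y" by blast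
    then show ?thesis
    proof cases
      case 1
      have "induced_map V Adj ?\<Phi> = induced_map V Adj (Pm x False Y)"
        using aV bV xV bx 1 xY YV ab by (intro induced_pointwise g\<Phi> PG ballI red_same) (auto simp: Tm_def Pm_def)
      then show ?thesis using e PS fold1[OF PA] by (intro exI[of _ "[induced_map V Adj (Pm x False Y)]"]) simp
    next
      case 2
      have "\<forall>g\<in>V. ?\<Phi> g ~~~ Pm x False Y g"
      proof
        fix g assume gV: "g \<in> V"
        show "?\<Phi> g ~~~ Pm x False Y g"
        proof (cases "g = b")
          case True
          have "?\<Phi> g = [(x, True), (b, False)] @ (a, False) # (x, False) # [(a, True)]"
            using True 2 bx xY ab by (auto simp: Tm_def Pm_def)
          also have "\<dots> ~~~ [(x, True), (b, False)] @ (x, False) # (a, False) # [(a, True)]"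
            using swap_eq[of "(a, False)" "(x, False)" "[(x, True), (b, False)]" "[(a, True)]"] 2 by simp
          also have "\<dots> ~~~ Pm x False Y g"
            using True 2 aV bV xV by (intro red_same) (auto simp: Pm_def)
          finally show ?thesis .
        next
          case False
          then show ?thesis using aV bV xV gV bx 2 xY YV by (intro red_same) (auto simp: Tm_def Pm_def)
        qed
      qed
      then have "induced_map V Adj ?\<Phi> = induced_map V Adj (Pm x False Y)"
        by (intro induced_pointwise g\<Phi> PG)
      then show ?thesis using e PS fold1[OF PA] by (intro exI[of _ "[induced_map V Adj (Pm x False Y)]"]) simp
    next
      case 3
      have dxb: "dominates Adj x b" unfolding dominates_def
      proof
        fix y assume "y \<in> lk Adj b"
        then have y: "Adj b y" by (simp add: lk_def)
        then have ya: "y = a \<or> Adj a y" using lk_dom[OF dab] by blast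
        show "y \<in> st Adj x"
        proof (rule ccontr)
          assume ny: "y \<notin> st Adj x"
          then have "y \<in> V - st Adj x" using adjD[OF y] by auto
          then have yY: "y \<in> Y" using uoc_step[OF u _ _ y] 3 by blast
          have "a \<notin> st Adj x" using 3 adjD by (auto simp: st_def lk_def)
          then have "a \<in> V - st Adj x" using aV by auto
          then have "a \<in> Y" using ya yY 3 uoc_step[OF u yY _] adjD by blast
          then show False using 3 by simp
        qed
      qed
      let ?CT = "CTm x False a True b"
      have CA: "induced_map V Adj ?CT \<in> auto (RAAG V Adj)" using CTm_auto aV bV xV dxb dab 3 bx ab by simp
      have CG: "good ?CT" using CTm_good aV bV xV dxb dab by blast
      have "induced_map V Adj ?\<Phi> = induced_map V Adj (\<lambda>g. subst_word (Pm x False Y) (?CT g))"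
        using aV bV xV bx 3 xY YV by (intro induced_pointwise g\<Phi> good_comp[OF PG CG] ballI red_same)
          (auto simp: Tm_def Pm_def CTm_def)
      also have "\<dots> = induced_map V Adj (Pm x False Y) \<otimes>\<^bsub>Aut\<^esub> induced_map V Adj ?CT"
        using prod2(1)[OF PG CG PA CA] by simp
      finally show ?thesis using e PS K_CTm[of x "{a,b,x}" a b False True] dxb dab 3 bx ab fold2[OF PA CA]
        by (intro exI[of _ "[induced_map V Adj (Pm x False Y), induced_map V Adj ?CT]"]) auto
    next
      case 4
      have bst: "b \<notin> st Adj x"
      proof
        assume "b \<in> st Adj x"
        then have "Adj x b" using bx by (simp add: st_def lk_def)
        then have "x = a \<or> Adj a x" using lk_dom[OF dab] adjD by blast
        then have "a \<in> st Adj x" using adjD by (auto simp: st_def lk_def)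
        then show False using 4 Ys by auto
      qed
      have dxb: "dominates Adj x b" unfolding dominates_def
      proof
        fix y assume "y \<in> lk Adj b"
        then have y: "Adj b y" by (simp add: lk_def)
        then have ya: "y = a \<or> Adj a y" using lk_dom[OF dab] by blast
        show "y \<in> st Adj x"
        proof (rule ccontr)
          assume ny: "y \<notin> st Adj x"
          then have yV: "y \<in> V - st Adj x" using adjD[OF y] by auto
          have bV': "b \<in> V - st Adj x" using bst bV by auto
          show False
          proof (cases "y = a")
            case True
            then have "b \<in> Y" using uoc_step[OF u _ bV'] 4 adjD[OF y] by blast
            then show False using 4 by simp
          next
            case False
            then have "y \<in> Y" using uoc_step[OF u _ yV] 4 ya by blast
            then have "b \<in> Y" using uoc_step[OF u _ bV'] adjD[OF y] by blast
            then show False using 4 by simp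
          qed
        qed
      qed
      have ax: "a \<noteq> x" using 4 xY by auto
      let ?CT = "CTm a True x False b"
      have CA: "induced_map V Adj ?CT \<in> auto (RAAG V Adj)" using CTm_auto aV bV xV dxb dab 4 bx ab ax by simp
      have CG: "good ?CT" using CTm_good aV bV xV dxb dab by blast
      have "induced_map V Adj ?\<Phi> = induced_map V Adj (\<lambda>g. subst_word ?CT (Pm x False Y g))"
        using aV bV xV bx 4 xY YV by (intro induced_pointwise g\<Phi> good_comp[OF CG PG] ballI red_same)
          (auto simp: Tm_def Pm_def CTm_def)
      also have "\<dots> = induced_map V Adj ?CT \<otimes>\<^bsub>Aut\<^esub> induced_map V Adj (Pm x False Y)"
        using prod2(1)[OF CG PG CA PA] by simp
      finally show ?thesis using e PS K_CTm[of a "{a,b,x}" x b True False] dxb dab 4 bx ab ax fold2[OF CA PA]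
        by (intro exI[of _ "[induced_map V Adj ?CT, induced_map V Adj (Pm x False Y)]"]) auto
    qed
  next
    case True
    note bx = True
    have dax: "dominates Adj a x" using dab bx by simp
    have ax: "a \<noteq> x" using ab bx by simp
    show ?thesis
    proof (cases "a \<in> Y")
      case False
      let ?W = "Y - st Adj a"
      have uW: "union_of_components V Adj a ?W" using uoc_new[OF u dax xV] by blast
      have QA: "induced_map V Adj (Pm a False ?W) \<in> auto (RAAG V Adj)" using Pm_auto[OF aV uW] .
      have QG: "good (Pm a False ?W)" using Pm_good[OF aV uW] .
      have "\<forall>g\<in>V. ?\<Phi> g ~~~ subst_word (Pm x False Y) (Pm a False ?W g)"
      proof
        fix g assume gV: "g \<in> V"
        show "?\<Phi> g ~~~ subst_word (Pm x False Y) (Pm a False ?W g)"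
        proof (cases "g \<in> Y \<and> Adj a g")
          case True
          have ast: "a \<in> st Adj x"
          proof (rule ccontr)
            assume "a \<notin> st Adj x"
            then have a1: "a \<in> V - st Adj x" using aV by blast
            have "Adj g a" using True adjD by blast
            then have "a \<in> Y" using uoc_step[OF u _ a1] True by blast
            then show False using False by simp
          qed
          then have axa: "Adj x a" using ax by (simp add: st_def lk_def)
          have gx: "g \<noteq> x" "g \<noteq> a" using True xY False by auto
          have "?\<Phi> g = inv_letter (a, False) # [(x, True), (g, False), (x, False)] @ [(a, False)]"
            using True gx bx xY False by (auto simp: Tm_def Pm_def)
          also have "\<dots> ~~~ [(x, True), (g, False), (x, False)]"
            using True axa adjD[OF axa] adjD[OF conjunct2[OF True]] aV xV gV
            by (intro conj_triv commw_letters) (auto simp: okl_def)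
          also have "\<dots> = subst_word (Pm x False Y) (Pm a False ?W g)"
            using True by (auto simp: Pm_def st_def lk_def)
          finally show ?thesis .
        next
          case F2: False
          consider "g \<in> Y" "g \<in> ?W" | "g = x" "g \<notin> ?W" | "g \<notin> Y" "g \<noteq> x" "g \<notin> ?W"
          proof -
            have m: "g \<in> ?W \<longleftrightarrow> g \<in> Y" using F2 False by (auto simp: st_def lk_def)
            show ?thesis
            proof (cases "g \<in> Y")
              case True then show ?thesis using that(1) m by simp
            next
              case False
              show ?thesis
              proof (cases "g = x")
                case True then show ?thesis using that(2) m False by simp
              next
                case F3: False then show ?thesis using that(3) m False by simp
              qed
            qed
          qed
          then show ?thesis
          proof cases
            case 1 then have "g \<noteq> x" "g \<noteq> a" using xY False by auto
            then show ?thesis using 1 aV bV xV gV bx False xY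
              by (intro red_same) (simp_all add: Tm_def Pm_def)
          next
            case 2 then show ?thesis using aV bV xV gV bx False xY ax
              by (intro red_same) (simp_all add: Tm_def Pm_def)
          next
            case 3 then show ?thesis using aV bV xV gV bx False xY ax
              by (intro red_same) (simp_all add: Tm_def Pm_def)
          qed
        qed
      qed
      then have "induced_map V Adj ?\<Phi> = induced_map V Adj (\<lambda>g. subst_word (Pm x False Y) (Pm a False ?W g))"
        by (intro induced_pointwise g\<Phi> good_comp[OF PG QG])
      also have "\<dots> = induced_map V Adj (Pm x False Y) \<otimes>\<^bsub>Aut\<^esub> induced_map V Adj (Pm a False ?W)"
        using prod2(1)[OF PG QG PA QA] by simp
      finally show ?thesis using e PS PaS[OF _ uW] fold2[OF PA QA]
        by (intro exI[of _ "[induced_map V Adj (Pm x False Y), induced_map V Adj (Pm a False ?W)]"]) auto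
    next
      case True
      note aY = True
      let ?W = "(Y \<union> {x}) - st Adj a"
      have uW: "union_of_components V Adj a ?W" using uoc_new[OF u dax xV] by blast
      have QA: "induced_map V Adj (Pm a False ?W) \<in> auto (RAAG V Adj)" using Pm_auto[OF aV uW] .
      have QG: "good (Pm a False ?W)" using Pm_good[OF aV uW] .
      have nax2: "\<not> Adj x a" using aY Ys by (auto simp: st_def lk_def)
      have nax: "\<not> Adj a x" "\<not> Adj x a" using nax2 adjD[of a x] by auto
      have "\<forall>g\<in>V. ?\<Phi> g ~~~ subst_word (Pm a False ?W) (Pm x False Y g)"
      proof
        fix g assume gV: "g \<in> V"
        show "?\<Phi> g ~~~ subst_word (Pm a False ?W) (Pm x False Y g)"
        proof (cases "g \<in> Y \<and> Adj a g")
          case True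
          have gx: "g \<noteq> x" "g \<noteq> a" using True xY adjD[OF conjunct2[OF True]] by auto
          have "?\<Phi> g = [(a, True), (x, True)] @ [(g, False)] @ [(x, False), (a, False)]"
            using True gx bx xY aY by (auto simp: Tm_def Pm_def)
          also have "\<dots> ~~~ [(a, True), (x, True)] @ (inv_letter (a, True) # [(g, False)] @ [(a, True)]) @ [(x, False), (a, False)]"
          proof -
            have "inv_letter (a, True) # [(g, False)] @ [(a, True)] ~~~ [(g, False)]"
              using True adjD[OF conjunct2[OF True]] aV gV by (intro conj_triv commw_letters) (auto simp: okl_def)
            from eq_ctx[OF eq_sym[OF this], of "[(a, True), (x, True)]" "[(x, False), (a, False)]"]
            show ?thesis by simp
          qed
          also have "\<dots> ~~~ subst_word (Pm a False ?W) (Pm x False Y g)"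
            using True gx aV xV gV nax xY by (intro red_same) (auto simp: Pm_def st_def lk_def)
          finally show ?thesis .
        next
          case F2: False
          have xW: "x \<in> ?W" using ax nax by (auto simp: st_def lk_def)
          have aW: "a \<notin> ?W" by (auto simp: st_def)
          consider "g \<in> Y" "g \<noteq> a" "g \<in> ?W" | "g = a" | "g = x" | "g \<notin> Y" "g \<noteq> x" "g \<notin> ?W"
          proof -
            have m: "g \<in> ?W \<longleftrightarrow> (g \<in> Y \<and> g \<noteq> a) \<or> g = x" using F2 ax nax xY by (auto simp: st_def lk_def)
            show ?thesis
            proof (cases "g = a")
              case True then show ?thesis using that(2) by simp
            next
              case False
              show ?thesis
              proof (cases "g = x")
                case True then show ?thesis using that(3) by simp
              next
                case F3: False
                show ?thesis
                proof (cases "g \<in> Y")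
                  case True then show ?thesis using that(1) m False by simp
                next
                  case F4: False then show ?thesis using that(4) m F3 by simp
                qed
              qed
            qed
          qed
          then show ?thesis
          proof cases
            case 1 then have "g \<noteq> x" using xY by auto
            then show ?thesis using 1 aV bV xV gV bx aY xY ax xW aW
              by (intro red_same) (simp_all add: Tm_def Pm_def)
          next
            case 2 then show ?thesis using aV bV xV gV bx aY xY ax xW aW
              by (intro red_same) (simp_all add: Tm_def Pm_def)
          next
            case 3 then show ?thesis using aV bV xV gV bx aY xY ax xW aW
              by (intro red_same) (simp_all add: Tm_def Pm_def)
          next
            case 4 then have "g \<noteq> a" using aY by auto
            then show ?thesis using 4 aV bV xV gV bx aY xY ax xW aW
              by (intro red_same) (simp_all add: Tm_def Pm_def)
          qed
        qed
      qed
      then have "induced_map V Adj ?\<Phi> = induced_map V Adj (\<lambda>g. subst_word (Pm a False ?W) (Pm x False Y g))"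
        by (intro induced_pointwise g\<Phi> good_comp[OF QG PG])
      also have "\<dots> = induced_map V Adj (Pm a False ?W) \<otimes>\<^bsub>Aut\<^esub> induced_map V Adj (Pm x False Y)"
        using prod2(1)[OF QG PG QA PA] by simp
      finally show ?thesis using e PS PaS[OF _ uW] fold2[OF QA PA]
        by (intro exI[of _ "[induced_map V Adj (Pm a False ?W), induced_map V Adj (Pm x False Y)]"]) auto
    qed
  qed
qed

end

theorem mainTheorem3:
  fixes V :: "'v set" and Adj :: "'v \<Rightarrow> 'v \<Rightarrow> bool" and a b c x :: 'v
  assumes "simple_graph V Adj"
    and "a \<in> V" and "b \<in> V" and "c \<in> V" and "x \<in> V"
    and "dominates Adj a b" and "a \<noteq> b"
    and "dominates Adj x c" and "x \<noteq> c"
  shows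
    "(transvection V Adj (a, False) (b, False)
       \<otimes>\<^bsub>AutRAAG V Adj\<^esub> conj_one V Adj (x, False) (c, False)
       \<otimes>\<^bsub>AutRAAG V Adj\<^esub> inv\<^bsub>AutRAAG V Adj\<^esub> (transvection V Adj (a, False) (b, False))
     \<in> K_sub V Adj {a, b, c, x})
   \<and> (\<forall>Y. Y \<subseteq> V \<longrightarrow> union_of_components V Adj x Y \<longrightarrow>
      (\<exists>fs. set fs \<subseteq> K_sub V Adj {a, b, x} \<union>
              {partial_conj V Adj (z, False) Y' | z Y'.
                 z \<in> {a, x} \<and> Y' \<subseteq> Y \<union> {x, a} \<and> union_of_components V Adj z Y'}
        \<and> transvection V Adj (a, False) (b, False)
            \<otimes>\<^bsub>AutRAAG V Adj\<^esub> partial_conj V Adj (x, False) Y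
            \<otimes>\<^bsub>AutRAAG V Adj\<^esub> inv\<^bsub>AutRAAG V Adj\<^esub> (transvection V Adj (a, False) (b, False))
          = foldr (\<lambda>f g. f \<otimes>\<^bsub>AutRAAG V Adj\<^esub> g) fs \<one>\<^bsub>AutRAAG V Adj\<^esub>))
   \<and> (transvection V Adj (a, False) (b, False)
       \<otimes>\<^bsub>AutRAAG V Adj\<^esub> inner_aut V Adj [(x, False)]
       \<otimes>\<^bsub>AutRAAG V Adj\<^esub> inv\<^bsub>AutRAAG V Adj\<^esub> (transvection V Adj (a, False) (b, False))
     \<in> K_sub V Adj {a, b, x})"
proof -
  interpret raag V Adj by unfold_locales (rule assms(1))
  have T: "transvection V Adj (a, False) (b, False) = induced_map V Adj (Tm a False b)"
    by (rule transvection_eq)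
  have C: "conj_one V Adj (x, False) (c, False) = induced_map V Adj (Cm x False c)"
    by (rule conj_one_eq)
  have I: "inner_aut V Adj [(x, False)] = induced_map V Adj (Im [(x, False)])"
    by (rule inner_aut_eq)
  show ?thesis
  proof (intro conjI allI impI)
    show "transvection V Adj (a, False) (b, False) \<otimes>\<^bsub>AutRAAG V Adj\<^esub> conj_one V Adj (x, False) (c, False)
       \<otimes>\<^bsub>AutRAAG V Adj\<^esub> inv\<^bsub>AutRAAG V Adj\<^esub> (transvection V Adj (a, False) (b, False))
     \<in> K_sub V Adj {a, b, c, x}"
      unfolding T C using part1 assms by blast
  next
    show "transvection V Adj (a, False) (b, False) \<otimes>\<^bsub>AutRAAG V Adj\<^esub> inner_aut V Adj [(x, False)]
       \<otimes>\<^bsub>AutRAAG V Adj\<^esub> inv\<^bsub>AutRAAG V Adj\<^esub> (transvection V Adj (a, False) (b, False))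
     \<in> K_sub V Adj {a, b, x}"
      unfolding T I using part3 assms by blast
  next
    fix Y assume "Y \<subseteq> V" "union_of_components V Adj x Y"
    then show "\<exists>fs. set fs \<subseteq> K_sub V Adj {a, b, x} \<union>
              {partial_conj V Adj (z, False) Y' | z Y'.
                 z \<in> {a, x} \<and> Y' \<subseteq> Y \<union> {x, a} \<and> union_of_components V Adj z Y'}
        \<and> transvection V Adj (a, False) (b, False)
            \<otimes>\<^bsub>AutRAAG V Adj\<^esub> partial_conj V Adj (x, False) Y
            \<otimes>\<^bsub>AutRAAG V Adj\<^esub> inv\<^bsub>AutRAAG V Adj\<^esub> (transvection V Adj (a, False) (b, False))
          = foldr (\<lambda>f g. f \<otimes>\<^bsub>AutRAAG V Adj\<^esub> g) fs \<one>\<^bsub>AutRAAG V Adj\<^esub>"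
      unfolding T partial_conj_eq[of x False Y] using part2 assms by blast
  qed
qed

end
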